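(* Let $\xi$ be a linear subspace of $\mathbb{R}^n$, and let $K$ and $L$ be compact convex sets contained in $\xi$. Let $d\ge 1$. Suppose that, for each $d$-dimensional linear subspace $\eta \subseteq \xi$, the projection $L_\eta$ contains a translate of $K_\eta$. Then $L_\eta$ contains a translate of $K_\eta$ for every $d$-dimensional linear subspace $\eta \subseteq \mathbb{R}^n$.
   Context: For a set $S\subseteq\mathbb{R}^n$ and a linear subspace $\eta$, $S_\eta$ denotes the orthogonal projection of $S$ onto $\eta$. *)

theory Defs
  imports "HOL-Analysis.Analysis"
begin

definition orth_proj :: "'a::euclidean_space set \<Rightarrow> 'a \<Rightarrow> 'a" where
  "orth_proj \<eta> x = (THE y. y \<in> \<eta> \<and> (\<forall>z\<in>\<eta>. orthogonal (x - y) z))"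

definition set_proj :: "'a::euclidean_space set \<Rightarrow> 'a set \<Rightarrow> 'a set" where
  "set_proj \<eta> S = orth_proj \<eta> ` S"

definition contains_translate :: "'a::euclidean_space set \<Rightarrow> 'a set \<Rightarrow> bool" where
  "contains_translate B A \<longleftrightarrow> (\<exists>t. (\<lambda>x. t + x) ` A \<subseteq> B)"

end

theory Submission
  imports Defs
begin

lemma orth_proj_ex1:
  fixes S :: "'a::euclidean_space set"
  assumes "subspace S"
  shows "\<exists>!y. y \<in> S \<and> (\<forall>z\<in>S. orthogonal (x - y) z)"
proof -
  obtain y z where y: "y \<in> span S" and z: "\<And>w. w \<in> span S \<Longrightarrow> orthogonal z w" and xe: "x = y + z"
    using orthogonal_subspace_decomp_exists by blast
  have ex: "y \<in> S \<and> (\<forall>w\<in>S. orthogonal (x - y) w)"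
    using y z xe assms by (simp add: span_eq_iff) (metis span_eq_iff)
  show ?thesis
  proof (rule ex1I[of _ y])
    show "y \<in> S \<and> (\<forall>w\<in>S. orthogonal (x - y) w)" by (rule ex)
  next
    fix y' assume h: "y' \<in> S \<and> (\<forall>w\<in>S. orthogonal (x - y') w)"
    have d: "y' - y \<in> S" using h ex assms by (simp add: subspace_diff)
    have "orthogonal (x - y) (y' - y)" "orthogonal (x - y') (y' - y)" using h ex d by auto
    hence "orthogonal (y' - y) (y' - y)" by (simp add: orthogonal_def inner_diff_left)
    thus "y' = y" by (simp add: orthogonal_def)
  qed
qed

lemma orth_proj_char:
  assumes "subspace S"
  shows "orth_proj S x \<in> S \<and> (\<forall>z\<in>S. orthogonal (x - orth_proj S x) z)"
  unfolding orth_proj_def using theI'[OF orth_proj_ex1[OF assms, of x]] .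

lemma orth_proj_eq:
  assumes "subspace S" "y \<in> S" "\<forall>z\<in>S. orthogonal (x - y) z"
  shows "orth_proj S x = y"
  using orth_proj_ex1[OF assms(1), of x] orth_proj_char[OF assms(1), of x] assms by blast

lemma orth_proj_linear:
  assumes "subspace S"
  shows "linear (orth_proj S)"
proof (rule linearI)
  fix x y
  have "orth_proj S (x + y) = orth_proj S x + orth_proj S y"
  proof (rule orth_proj_eq[OF assms])
    show "orth_proj S x + orth_proj S y \<in> S"
      using orth_proj_char[OF assms] assms by (simp add: subspace_add)
    show "\<forall>z\<in>S. orthogonal (x + y - (orth_proj S x + orth_proj S y)) z"
    proof
      fix z assume "z \<in> S"
      hence "orthogonal (x - orth_proj S x) z" "orthogonal (y - orth_proj S y) z"
        using orth_proj_char[OF assms] by auto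
      hence "orthogonal ((x - orth_proj S x) + (y - orth_proj S y)) z" by (simp add: orthogonal_clauses)
      thus "orthogonal (x + y - (orth_proj S x + orth_proj S y)) z" by (simp add: algebra_simps)
    qed
  qed
  thus "orth_proj S (x + y) = orth_proj S x + orth_proj S y" .
next
  fix c :: real and x
  show "orth_proj S (c *\<^sub>R x) = c *\<^sub>R orth_proj S x"
  proof (rule orth_proj_eq[OF assms])
    show "c *\<^sub>R orth_proj S x \<in> S"
      using orth_proj_char[OF assms] assms by (simp add: subspace_scale)
    show "\<forall>z\<in>S. orthogonal (c *\<^sub>R x - c *\<^sub>R orth_proj S x) z"
    proof
      fix z assume "z \<in> S"
      hence "orthogonal (x - orth_proj S x) z" using orth_proj_char[OF assms] by auto
      hence "orthogonal (c *\<^sub>R (x - orth_proj S x)) z" by (simp add: orthogonal_clauses)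
      thus "orthogonal (c *\<^sub>R x - c *\<^sub>R orth_proj S x) z" by (simp add: algebra_simps)
    qed
  qed
qed

lemma extend_subspace:
  fixes Z X :: "'a::euclidean_space set"
  assumes "subspace Z" "subspace X" "Z \<subseteq> X" "dim Z \<le> d" "d \<le> dim X"
  obtains W where "subspace W" "Z \<subseteq> W" "W \<subseteq> X" "dim W = d"
proof -
  obtain B0 where B0: "B0 \<subseteq> Z" "independent B0" "Z \<subseteq> span B0" "card B0 = dim Z"
    using basis_exists by blast
  obtain B where B: "B0 \<subseteq> B" "B \<subseteq> X" "independent B" "X \<subseteq> span B"
    using maximal_independent_subset_extend[of B0 X] B0 assms(3) by blast
  have fB: "finite B" using B(3) finiteI_independent by blast
  have cB: "card B = dim X" using B assms(2)
    by (metis dim_eq_card_independent dim_span span_eq_iff span_mono subset_antisym span_subspace)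
  have "card B0 \<le> card (B - B0) + card B0" by simp
  have cBB: "card (B - B0) = card B - card B0" using fB B(1) by (simp add: card_Diff_subset finite_subset)
  have "d - card B0 \<le> card (B - B0)" using cBB cB B0(4) assms(5) by simp
  then obtain C where C: "C \<subseteq> B - B0" "card C = d - card B0"
    using obtain_subset_with_card_n by metis
  define W where "W = span (B0 \<union> C)"
  have ind: "independent (B0 \<union> C)" using B C by (meson Diff_subset independent_mono le_sup_iff order_trans)
  have fin: "finite C" "finite B0" using C fB B by (auto intro: finite_subset)
  have "card (B0 \<union> C) = card B0 + card C" using C fin by (subst card_Un_disjoint) auto
  hence "dim W = d" unfolding W_def using ind C B0(4) assms(4)
    by (simp add: dim_span dim_eq_card_independent)
  moreover have "subspace W" unfolding W_def by simp
  moreover have "Z \<subseteq> W" unfolding W_def using B0(3) by (meson span_mono sup_ge1 order_trans)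
  moreover have "W \<subseteq> X" unfolding W_def using B C assms(2)
    by (metis Diff_subset le_sup_iff order_trans span_minimal)
  ultimately show ?thesis using that by blast
qed

theorem proposition3p6:
  fixes \<xi> K L :: "'a::euclidean_space set" and d :: nat
  assumes "subspace \<xi>"
    and "compact K" and "convex K" and "compact L" and "convex L"
    and "K \<subseteq> \<xi>" and "L \<subseteq> \<xi>"
    and "1 \<le> d" and "d \<le> dim \<xi>"
    and "\<forall>\<eta>. subspace \<eta> \<and> dim \<eta> = d \<and> \<eta> \<subseteq> \<xi> \<longrightarrow>
           contains_translate (set_proj \<eta> L) (set_proj \<eta> K)"
  shows "\<forall>\<eta>. subspace \<eta> \<and> dim \<eta> = d \<longrightarrow>
           contains_translate (set_proj \<eta> L) (set_proj \<eta> K)"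
proof (intro allI impI)
  fix \<eta> :: "'a set" assume h: "subspace \<eta> \<and> dim \<eta> = d"
  hence s\<eta>: "subspace \<eta>" and d\<eta>: "dim \<eta> = d" by auto
  define P where "P = orth_proj \<xi>"
  have linP: "linear P" unfolding P_def using orth_proj_linear[OF assms(1)] .
  define Z where "Z = P ` \<eta>"
  have sZ: "subspace Z" unfolding Z_def using linP s\<eta> by (simp add: linear_subspace_image)
  have dZ: "dim Z \<le> d" unfolding Z_def using linP d\<eta> by (metis dim_image_le)
  have ZX: "Z \<subseteq> \<xi>" unfolding Z_def P_def using orth_proj_char[OF assms(1)] by auto
  obtain W where W: "subspace W" "Z \<subseteq> W" "W \<subseteq> \<xi>" "dim W = d"
    using extend_subspace[OF sZ assms(1) ZX dZ assms(9)] by blast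
  obtain t where t: "(\<lambda>x. t + x) ` set_proj W K \<subseteq> set_proj W L"
    using assms(10) W unfolding contains_translate_def by blast
  have linE: "linear (orth_proj \<eta>)" using orth_proj_linear[OF s\<eta>] .
  have key: "orth_proj \<eta> x = orth_proj \<eta> (orth_proj W x)" if "x \<in> \<xi>" for x
  proof -
    define w where "w = x - orth_proj W x"
    have w\<xi>: "w \<in> \<xi>" unfolding w_def using that W orth_proj_char[OF W(1), of x] assms(1)
      by (meson subsetD subspace_diff)
    have "orthogonal w y" if "y \<in> \<eta>" for y
    proof -
      have "P y \<in> W" using that W(2) unfolding Z_def by auto
      hence o1: "orthogonal w (P y)" unfolding w_def using orth_proj_char[OF W(1), of x] by auto
      have "orthogonal (y - P y) w" unfolding P_def using orth_proj_char[OF assms(1), of y] w\<xi> by auto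
      hence o2: "orthogonal w (y - P y)" by (simp add: orthogonal_commute)
      show ?thesis using o1 o2 by (simp add: orthogonal_def inner_diff_right)
    qed
    hence "orth_proj \<eta> w = 0" by (intro orth_proj_eq[OF s\<eta>]) (auto simp: subspace_0[OF s\<eta>])
    moreover have "x = orth_proj W x + w" unfolding w_def by simp
    ultimately show ?thesis using linear_add[OF linE, of "orth_proj W x" w] by simp
  qed
  show "contains_translate (set_proj \<eta> L) (set_proj \<eta> K)"
    unfolding contains_translate_def
  proof (intro exI[of _ "orth_proj \<eta> t"] subsetI)
    fix v assume "v \<in> (\<lambda>x. orth_proj \<eta> t + x) ` set_proj \<eta> K"
    then obtain k where k: "k \<in> K" and v: "v = orth_proj \<eta> t + orth_proj \<eta> k"
      unfolding set_proj_def by auto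
    have "t + orth_proj W k \<in> set_proj W L" using t k unfolding set_proj_def by auto
    then obtain l where l: "l \<in> L" and tl: "t + orth_proj W k = orth_proj W l"
      unfolding set_proj_def by auto
    have "v = orth_proj \<eta> (t + orth_proj W k)"
      using v key[of k] k assms(6) linear_add[OF linE] by auto
    also have "\<dots> = orth_proj \<eta> l" using tl key[of l] l assms(7) by auto
    finally show "v \<in> set_proj \<eta> L" using l unfolding set_proj_def by auto
  qed
qed

end
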